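(* Let $R$ be a linear subspace of $\mathbb{R}^d$ of dimension $t\le\frac{d}{16(\log d)^2}$, and let $z\in\mathbb{R}^d$ be a Gaussian vector with $\mathbb{E}[z]=0$ and $\mathbb{E}[zz^\top]=\frac1dI$. Then with high probability at least half of the indices $i\in[d]$ satisfy $|(P_{\perp_R}z)_i|\ge\frac{1}{4\sqrt d}$.
   Context: $P_{\perp_R}$ is the orthogonal projection onto the orthogonal complement of $R$. "With high probability" refers to probability tending to $1$ as $d\to\infty$. *)

theory Defs
  imports "HOL-Probability.Probability"
begin

text \<open>Vectors of R^d are represented as functions nat => real; only the
coordinates 0..d-1 are relevant, vectors of R^d are those vanishing outside {..<d}.\<close>

definition vec_d :: "nat \<Rightarrow> (nat \<Rightarrow> real) set" where
  "vec_d d = {x. \<forall>i\<ge>d. x i = 0}"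

definition ip :: "nat \<Rightarrow> (nat \<Rightarrow> real) \<Rightarrow> (nat \<Rightarrow> real) \<Rightarrow> real" where
  "ip d x y = (\<Sum>i<d. x i * y i)"

definition is_subspace :: "nat \<Rightarrow> (nat \<Rightarrow> real) set \<Rightarrow> bool" where
  "is_subspace d R \<longleftrightarrow> R \<subseteq> vec_d d \<and> (\<lambda>_. 0) \<in> R \<and>
     (\<forall>x\<in>R. \<forall>y\<in>R. (\<lambda>i. x i + y i) \<in> R) \<and>
     (\<forall>c::real. \<forall>x\<in>R. (\<lambda>i. c * x i) \<in> R)"

definition lin_span :: "(nat \<Rightarrow> real) set \<Rightarrow> (nat \<Rightarrow> real) set" where
  "lin_span S = {x. \<exists>c. x = (\<lambda>i. \<Sum>v\<in>S. c v * v i)}"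

definition sub_dim :: "(nat \<Rightarrow> real) set \<Rightarrow> nat" where
  "sub_dim R = (LEAST n. \<exists>S. finite S \<and> card S = n \<and> S \<subseteq> R \<and> lin_span S = R)"

definition perp_proj :: "nat \<Rightarrow> (nat \<Rightarrow> real) set \<Rightarrow> (nat \<Rightarrow> real) \<Rightarrow> (nat \<Rightarrow> real)" where
  "perp_proj d R z = (THE w. w \<in> vec_d d \<and> (\<lambda>i. if i < d then z i - w i else 0) \<in> R
                         \<and> (\<forall>r\<in>R. ip d w r = 0))"

text \<open>Centered Gaussian vector in R^d with covariance (1/d) I: independent coordinates
  N(0, 1/d), i.e. standard deviation 1/sqrt d.\<close>
definition gauss_vec :: "nat \<Rightarrow> (nat \<Rightarrow> real) measure" where
  "gauss_vec d = PiM {..<d} (\<lambda>_. density lborel (normal_density 0 (1 / sqrt (real d))))"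

end

theory Submission
  imports Defs
begin

definition ortho :: "nat \<Rightarrow> (nat \<Rightarrow> nat \<Rightarrow> real) \<Rightarrow> nat \<Rightarrow> bool" where
  "ortho d U m \<longleftrightarrow> (\<forall>j<m. \<forall>k<m. ip d (U j) (U k) = (if j = k then 1 else 0))"

definition expand :: "nat \<Rightarrow> (nat \<Rightarrow> nat \<Rightarrow> real) \<Rightarrow> nat \<Rightarrow> (nat \<Rightarrow> real) \<Rightarrow> (nat \<Rightarrow> real)" where
  "expand d U m v = (\<lambda>i. \<Sum>k<m. ip d (U k) v * U k i)"

lemma ip_sym: "ip d x y = ip d y x" by (simp add: ip_def mult.commute)

lemma ip_sum_right: "ip d x (\<lambda>i. \<Sum>k\<in>F. c k * y k i) = (\<Sum>k\<in>F. c k * ip d x (y k))"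
proof -
  have "ip d x (\<lambda>i. \<Sum>k\<in>F. c k * y k i) = (\<Sum>i<d. \<Sum>k\<in>F. c k * (x i * y k i))"
    unfolding ip_def by (simp add: sum_distrib_left mult_ac)
  also have "\<dots> = (\<Sum>k\<in>F. \<Sum>i<d. c k * (x i * y k i))" by (rule sum.swap)
  also have "\<dots> = (\<Sum>k\<in>F. c k * ip d x (y k))" unfolding ip_def by (simp add: sum_distrib_left)
  finally show ?thesis .
qed

lemma ip_sum_left: "ip d (\<lambda>i. \<Sum>k\<in>F. c k * y k i) x = (\<Sum>k\<in>F. c k * ip d (y k) x)"
  by (subst ip_sym) (simp add: ip_sum_right ip_sym)

lemma ip_diff_right: "ip d x (\<lambda>i. y i - z i) = ip d x y - ip d x z"
  unfolding ip_def by (simp add: right_diff_distrib sum_subtractf)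

lemma ip_diff_left: "ip d (\<lambda>i. y i - z i) x = ip d y x - ip d z x"
  by (subst ip_sym) (simp add: ip_diff_right ip_sym)

lemma ip_scale_left: "ip d (\<lambda>i. c * y i) x = c * ip d y x"
  unfolding ip_def by (simp add: sum_distrib_left mult_ac)

lemma ip_scale_right: "ip d x (\<lambda>i. c * y i) = c * ip d x y"
  unfolding ip_def by (simp add: sum_distrib_left mult_ac)

lemma ip_self_nonneg: "0 \<le> ip d x x"
  unfolding ip_def by (intro sum_nonneg) auto

lemma ip_self_zero: "ip d x x = 0 \<Longrightarrow> i < d \<Longrightarrow> x i = 0"
  unfolding ip_def by (subst (asm) sum_nonneg_eq_0_iff) auto

lemma ip_cong: "(\<And>i. i < d \<Longrightarrow> x i = x' i) \<Longrightarrow> (\<And>i. i < d \<Longrightarrow> y i = y' i) \<Longrightarrow> ip d x y = ip d x' y'"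
  unfolding ip_def by (intro sum.cong) auto

lemma sub_zero: "is_subspace d R \<Longrightarrow> (\<lambda>_. 0) \<in> R"
  unfolding is_subspace_def by simp

lemma sub_add: "is_subspace d R \<Longrightarrow> x \<in> R \<Longrightarrow> y \<in> R \<Longrightarrow> (\<lambda>i. x i + y i) \<in> R"
  unfolding is_subspace_def by simp

lemma sub_scale: "is_subspace d R \<Longrightarrow> x \<in> R \<Longrightarrow> (\<lambda>i. c * x i) \<in> R"
  unfolding is_subspace_def by simp

lemma sub_sum:
  assumes "is_subspace d R" "finite F" "\<forall>k\<in>F. y k \<in> R"
  shows "(\<lambda>i. \<Sum>k\<in>F. c k * y k i) \<in> R"
  using assms(2,3)
proof (induction F rule: finite_induct)
  case empty
  then show ?case using sub_zero[OF assms(1)] by simp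
next
  case (insert a F)
  have "(\<lambda>i. c a * y a i) \<in> R" using sub_scale[OF assms(1)] insert by simp
  moreover have "(\<lambda>i. \<Sum>k\<in>F. c k * y k i) \<in> R" using insert by simp
  ultimately have "(\<lambda>i. (\<lambda>i. c a * y a i) i + (\<lambda>i. \<Sum>k\<in>F. c k * y k i) i) \<in> R"
    by (rule sub_add[OF assms(1)])
  then show ?case using insert by simp
qed

lemma sub_diff:
  assumes "is_subspace d R" "x \<in> R" "y \<in> R"
  shows "(\<lambda>i. x i - y i) \<in> R"
proof -
  have "(\<lambda>i. (-1) * y i) \<in> R" using sub_scale assms by blast
  then have "(\<lambda>i. x i + (\<lambda>i. (-1) * y i) i) \<in> R" using sub_add assms by blast
  then show ?thesis by simp
qed

lemma sub_vec: "is_subspace d R \<Longrightarrow> x \<in> R \<Longrightarrow> i \<ge> d \<Longrightarrow> x i = 0"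
  unfolding is_subspace_def vec_d_def by auto

lemma expand_in: "is_subspace d R \<Longrightarrow> \<forall>k<m. U k \<in> R \<Longrightarrow> expand d U m v \<in> R"
  unfolding expand_def by (rule sub_sum) auto

lemma ip_expand: "ortho d U m \<Longrightarrow> j < m \<Longrightarrow> ip d (U j) (expand d U m v) = ip d (U j) v"
proof -
  assume o: "ortho d U m" "j < m"
  have "ip d (U j) (expand d U m v) = (\<Sum>k<m. ip d (U k) v * ip d (U j) (U k))"
    unfolding expand_def by (rule ip_sum_right)
  also have "\<dots> = (\<Sum>k<m. if k = j then ip d (U j) v else 0)"
    using o unfolding ortho_def by (intro sum.cong) auto
  also have "\<dots> = ip d (U j) v" using o by simp
  finally show ?thesis .
qed

lemma ip_expand_expand: "ortho d U m \<Longrightarrow> ip d (expand d U m x) y = (\<Sum>k<m. ip d (U k) x * ip d (U k) y)"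
  unfolding expand_def by (simp add: ip_sum_left)

lemma ip_x_expand: "ip d x (expand d U m y) = (\<Sum>k<m. ip d (U k) y * ip d x (U k))"
  unfolding expand_def by (simp add: ip_sum_right)


lemma expand_Suc: "expand d (U(m:=u)) (Suc m) v = (\<lambda>i. expand d U m v i + ip d u v * u i)"
  unfolding expand_def by (auto simp: fun_eq_iff intro!: sum.cong)

lemma expand_lin: "expand d U m (\<lambda>i. \<Sum>v\<in>F. c v * y v i) = (\<lambda>i. \<Sum>v\<in>F. c v * expand d U m (y v) i)"
proof
  fix i
  have "expand d U m (\<lambda>i. \<Sum>v\<in>F. c v * y v i) i = (\<Sum>k<m. \<Sum>v\<in>F. c v * ip d (U k) (y v) * U k i)"
    unfolding expand_def by (simp add: ip_sum_right sum_distrib_right)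
  also have "\<dots> = (\<Sum>v\<in>F. \<Sum>k<m. c v * ip d (U k) (y v) * U k i)" by (rule sum.swap)
  also have "\<dots> = (\<Sum>v\<in>F. c v * expand d U m (y v) i)"
    unfolding expand_def by (simp add: sum_distrib_left mult_ac)
  finally show "expand d U m (\<lambda>i. \<Sum>v\<in>F. c v * y v i) i = (\<Sum>v\<in>F. c v * expand d U m (y v) i)" .
qed

lemma gs_extend:
  assumes R: "is_subspace d R" and o: "ortho d U m" and UR: "\<forall>k<m. U k \<in> R"
    and x: "x \<in> R" and ne: "expand d U m x \<noteq> x"
  shows "\<exists>u. u \<in> R \<and> ortho d (U(m:=u)) (Suc m) \<and> expand d (U(m:=u)) (Suc m) x = x \<and>
     (\<forall>v. expand d U m v = v \<longrightarrow> expand d (U(m:=u)) (Suc m) v = v)"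
proof -
  define r where "r = (\<lambda>i. x i - expand d U m x i)"
  have rR: "r \<in> R" unfolding r_def by (rule sub_diff[OF R x expand_in[OF R UR]])
  have rU: "ip d (U j) r = 0" if "j < m" for j
    unfolding r_def using ip_expand[OF o that] by (simp add: ip_diff_right)
  obtain i where i: "expand d U m x i \<noteq> x i" using ne by auto
  have "i < d"
  proof (rule ccontr)
    assume "\<not> i < d"
    then have "expand d U m x i = 0" "x i = 0"
      using sub_vec[OF R expand_in[OF R UR]] sub_vec[OF R x] by auto
    with i show False by simp
  qed
  have "r i \<noteq> 0" using i unfolding r_def by simp
  then have "ip d r r \<noteq> 0" using ip_self_zero[OF _ \<open>i<d\<close>] by blast
  then have pos: "ip d r r > 0" using ip_self_nonneg[of d r] by linarith
  define n where "n = sqrt (ip d r r)"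
  have npos: "n > 0" unfolding n_def using pos by simp
  have nn: "n * n = ip d r r" unfolding n_def using pos by simp
  define u where "u = (\<lambda>i. (1/n) * r i)"
  have uR: "u \<in> R" unfolding u_def by (rule sub_scale[OF R rR])
  have uu: "ip d u u = 1"
  proof -
    have "ip d u u = (1/n) * ((1/n) * ip d r r)" unfolding u_def ip_scale_left ip_scale_right
      by simp
    then show ?thesis using nn npos pos by (simp add: field_simps)
  qed
  have uU: "ip d u (U j) = 0" if "j < m" for j
    unfolding u_def ip_scale_left using rU[OF that] by (simp add: ip_sym)
  have ur: "ip d u r = n"
  proof -
    have "ip d u r = (1/n) * ip d r r" unfolding u_def ip_scale_left by simp
    then have "n * ip d u r = n * n" using nn npos by (simp add: field_simps)
    then show ?thesis using npos by simp
  qed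
  have o': "ortho d (U(m:=u)) (Suc m)"
    unfolding ortho_def
  proof (intro allI impI)
    fix j k assume j: "j < Suc m" and k: "k < Suc m"
    show "ip d ((U(m := u)) j) ((U(m := u)) k) = (if j = k then 1 else 0)"
    proof (cases "j = m"; cases "k = m")
      assume "j = m" "k = m" then show ?thesis using uu by simp
    next
      assume "j = m" "k \<noteq> m" then show ?thesis using uU[of k] k by simp
    next
      assume "j \<noteq> m" "k = m" then show ?thesis using uU[of j] j by (simp add: ip_sym)
    next
      assume "j \<noteq> m" "k \<noteq> m" then show ?thesis using o j k unfolding ortho_def by simp
    qed
  qed
  have ex: "expand d (U(m:=u)) (Suc m) x = x"
  proof -
    have "ip d u x = ip d u (\<lambda>i. r i + expand d U m x i)" by (simp add: r_def)
    also have "\<dots> = ip d u r + ip d u (expand d U m x)" by (simp add: ip_def sum.distrib algebra_simps)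
    also have "ip d u (expand d U m x) = 0" using uU by (simp add: ip_x_expand)
    finally have "ip d u x = n" using ur by simp
    then show ?thesis unfolding expand_Suc using npos by (auto simp: fun_eq_iff u_def r_def)
  qed
  have ev: "expand d (U(m:=u)) (Suc m) v = v" if "expand d U m v = v" for v
  proof -
    have "ip d u v = ip d u (expand d U m v)" using that by simp
    also have "\<dots> = 0" using uU by (simp add: ip_x_expand)
    finally show ?thesis unfolding expand_Suc using that by simp
  qed
  show ?thesis using uR o' ex ev by blast
qed

lemma gs:
  assumes R: "is_subspace d R" and "finite S" "S \<subseteq> R"
  shows "\<exists>m U. m \<le> card S \<and> ortho d U m \<and> (\<forall>k<m. U k \<in> R) \<and> (\<forall>v\<in>S. expand d U m v = v)"
  using assms(2,3)
proof (induction S rule: finite_induct)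
  case empty
  show ?case by (rule exI[of _ 0]) (simp add: ortho_def)
next
  case (insert x F)
  then obtain m U where mU: "m \<le> card F" "ortho d U m" "\<forall>k<m. U k \<in> R" "\<forall>v\<in>F. expand d U m v = v"
    by auto
  have xR: "x \<in> R" using insert by auto
  show ?case
  proof (cases "expand d U m x = x")
    case True
    then show ?thesis using mU insert by (intro exI[of _ m] exI[of _ U]) auto
  next
    case False
    from gs_extend[OF R mU(2) mU(3) xR False] obtain u where
      u: "u \<in> R" "ortho d (U(m:=u)) (Suc m)" "expand d (U(m:=u)) (Suc m) x = x"
         "\<forall>v. expand d U m v = v \<longrightarrow> expand d (U(m:=u)) (Suc m) v = v" by blast
    have a: "Suc m \<le> card (insert x F)" using mU insert by simp
    have b: "\<forall>k<Suc m. (U(m:=u)) k \<in> R" using mU u by auto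
    have c: "\<forall>v\<in>insert x F. expand d (U(m:=u)) (Suc m) v = v" using mU(4) u(3,4) by blast
    show ?thesis using a b c u(2) by blast
  qed
qed

lemma bessel:
  assumes o: "ortho d U m"
  shows "(\<Sum>k<m. (ip d (U k) x)^2) \<le> ip d x x"
proof -
  define y where "y = expand d U m x"
  have yy: "ip d y y = (\<Sum>k<m. (ip d (U k) x)^2)"
    unfolding y_def using o by (simp add: ip_expand_expand ip_expand power2_eq_square)
  have yx: "ip d y x = (\<Sum>k<m. (ip d (U k) x)^2)"
    unfolding y_def using o by (simp add: ip_expand_expand power2_eq_square)
  have "0 \<le> ip d (\<lambda>i. x i - y i) (\<lambda>i. x i - y i)" by (rule ip_self_nonneg)
  also have "\<dots> = ip d x x - ip d y x - ip d x y + ip d y y"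
    by (simp add: ip_diff_left ip_diff_right)
  finally show ?thesis using yy yx by (simp add: ip_sym[of d x y])
qed

lemma ortho_le:
  assumes o: "ortho d U m"
  shows "m \<le> d"
proof -
  have "real m = (\<Sum>k<m. ip d (U k) (U k))" using o unfolding ortho_def by simp
  also have "\<dots> = (\<Sum>i<d. \<Sum>k<m. (ip d (U k) (\<lambda>j. if j = i then 1 else 0))^2)"
  proof -
    have "(\<Sum>k<m. ip d (U k) (U k)) = (\<Sum>k<m. \<Sum>i<d. (U k i)^2)"
      unfolding ip_def by (simp add: power2_eq_square)
    also have "\<dots> = (\<Sum>i<d. \<Sum>k<m. (U k i)^2)" by (rule sum.swap)
    also have "\<dots> = (\<Sum>i<d. \<Sum>k<m. (ip d (U k) (\<lambda>j. if j = i then 1 else 0))^2)"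
      unfolding ip_def by (intro sum.cong refl) (simp add: if_distrib cong: if_cong)
    finally show ?thesis .
  qed
  also have "\<dots> \<le> (\<Sum>i<d. ip d (\<lambda>j. if j = i then 1 else 0) (\<lambda>j. if j = i then 1 else 0))"
    by (intro sum_mono bessel[OF o])
  also have "\<dots> = real d" unfolding ip_def by (simp add: if_distrib cong: if_cong)
  finally show ?thesis by simp
qed


lemma ortho_inj: "ortho d U m \<Longrightarrow> inj_on U {..<m}"
proof (rule inj_onI)
  fix j k assume o: "ortho d U m" and j: "j \<in> {..<m}" and k: "k \<in> {..<m}" and e: "U j = U k"
  have "ip d (U j) (U k) = 1" using o k e unfolding ortho_def by simp
  then show "j = k" using o j k unfolding ortho_def by (auto split: if_splits)
qed

lemma fin_span:
  assumes R: "is_subspace d R"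
  shows "\<exists>S. finite S \<and> S \<subseteq> R \<and> lin_span S = R"
proof -
  define P where "P = (\<lambda>m. \<exists>U. ortho d U m \<and> (\<forall>k<m. U k \<in> R))"
  have P0: "P 0" unfolding P_def ortho_def by simp
  have Pb: "\<And>y. P y \<Longrightarrow> y \<le> d" unfolding P_def using ortho_le by auto
  define m where "m = Greatest P"
  have "P m" unfolding m_def by (rule GreatestI_nat[of P 0 d, OF P0 Pb])
  then obtain U where o: "ortho d U m" and UR: "\<forall>k<m. U k \<in> R" unfolding P_def by blast
  have full: "expand d U m x = x" if x: "x \<in> R" for x
  proof (rule ccontr)
    assume "expand d U m x \<noteq> x"
    from gs_extend[OF R o UR x this] obtain u where "u \<in> R" "ortho d (U(m:=u)) (Suc m)" by blast
    then have "P (Suc m)" unfolding P_def using UR by (intro exI[of _ "U(m:=u)"]) auto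
    then have "Suc m \<le> Greatest P" by (rule Greatest_le_nat[of P "Suc m" d, OF _ Pb])
    then have "Suc m \<le> m" by (simp add: m_def)
    then show False by simp
  qed
  have "lin_span (U ` {..<m}) = R"
  proof
    show "lin_span (U ` {..<m}) \<subseteq> R"
    proof
      fix x assume "x \<in> lin_span (U ` {..<m})"
      then obtain c where "x = (\<lambda>i. \<Sum>v\<in>U ` {..<m}. c v * v i)" unfolding lin_span_def by blast
      moreover have "(\<lambda>i. \<Sum>v\<in>U ` {..<m}. c v * id v i) \<in> R"
        by (rule sub_sum[OF R]) (use UR in auto)
      ultimately show "x \<in> R" by simp
    qed
  next
    show "R \<subseteq> lin_span (U ` {..<m})"
    proof
      fix x assume x: "x \<in> R"
      have "x = (\<lambda>i. \<Sum>k<m. ip d (U k) x * U k i)" using full[OF x] unfolding expand_def by simp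
      also have "\<dots> = (\<lambda>i. \<Sum>v\<in>U ` {..<m}. ip d v x * v i)"
      proof
        fix i
        show "(\<Sum>k<m. ip d (U k) x * U k i) = (\<Sum>v\<in>U ` {..<m}. ip d v x * v i)"
          using sum.reindex[OF ortho_inj[OF o], of "\<lambda>v. ip d v x * v i"] by (simp add: comp_def)
      qed
      finally show "x \<in> lin_span (U ` {..<m})" unfolding lin_span_def
        by (intro CollectI exI[of _ "\<lambda>v. ip d v x"])
    qed
  qed
  then show ?thesis using UR by (intro exI[of _ "U ` {..<m}"]) auto
qed

lemma proj_rep:
  assumes R: "is_subspace d R"
  shows "\<exists>m U. m \<le> sub_dim R \<and> ortho d U m \<and> (\<forall>k<m. U k \<in> R) \<and> (\<forall>r\<in>R. expand d U m r = r)"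
proof -
  obtain S0 where S0: "finite S0" "S0 \<subseteq> R" "lin_span S0 = R" using fin_span[OF R] by blast
  have ex: "\<exists>n S. finite S \<and> card S = n \<and> S \<subseteq> R \<and> lin_span S = R"
    using S0 by (intro exI[of _ "card S0"] exI[of _ S0]) simp
  have "\<exists>S. finite S \<and> card S = sub_dim R \<and> S \<subseteq> R \<and> lin_span S = R"
    unfolding sub_dim_def by (rule LeastI_ex[OF ex])
  then obtain S where S: "finite S" "card S = sub_dim R" "S \<subseteq> R" "lin_span S = R" by (elim exE conjE)
  from gs[OF R S(1,3)] obtain m U where mU: "m \<le> card S" "ortho d U m" "\<forall>k<m. U k \<in> R"
    "\<forall>v\<in>S. expand d U m v = v" by (elim exE conjE)
  have "expand d U m r = r" if r: "r \<in> R" for r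
  proof -
    from r S(4) obtain c where rc: "r = (\<lambda>i. \<Sum>v\<in>S. c v * v i)" unfolding lin_span_def by auto
    have "expand d U m r = (\<lambda>i. \<Sum>v\<in>S. c v * expand d U m v i)"
      unfolding rc by (rule expand_lin)
    also have "\<dots> = r" unfolding rc using mU(4) by simp
    finally show ?thesis .
  qed
  then show ?thesis using mU S(2) by (intro exI[of _ m] exI[of _ U]) simp
qed

lemma perp_eq:
  assumes R: "is_subspace d R" and o: "ortho d U m" and UR: "\<forall>k<m. U k \<in> R"
    and full: "\<forall>r\<in>R. expand d U m r = r"
  shows "perp_proj d R z = (\<lambda>i. if i < d then z i - expand d U m z i else 0)"
proof -
  define w where "w = (\<lambda>i. if i < d then z i - expand d U m z i else 0)"
  have eR: "expand d U m z \<in> R" by (rule expand_in[OF R UR])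
  have ez: "(\<lambda>i. if i < d then z i - w i else 0) = expand d U m z"
    using sub_vec[OF R eR] by (auto simp: w_def fun_eq_iff)
  have P1: "w \<in> vec_d d" unfolding w_def vec_d_def by simp
  have P2: "(\<lambda>i. if i < d then z i - w i else 0) \<in> R" using ez eR by simp
  have P3: "\<forall>r\<in>R. ip d w r = 0"
  proof
    fix r assume r: "r \<in> R"
    have "ip d w r = ip d (\<lambda>i. z i - expand d U m z i) r" unfolding w_def by (rule ip_cong) auto
    also have "\<dots> = ip d z r - ip d (expand d U m z) r" by (rule ip_diff_left)
    also have "ip d z r = ip d z (expand d U m r)" using full r by simp
    also have "\<dots> = (\<Sum>k<m. ip d (U k) z * ip d (U k) r)"
      by (simp add: ip_x_expand ip_sym mult.commute)
    also have "ip d (expand d U m z) r = (\<Sum>k<m. ip d (U k) z * ip d (U k) r)"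
      using o by (rule ip_expand_expand)
    finally show "ip d w r = 0" by simp
  qed
  have "perp_proj d R z = w" unfolding perp_proj_def
  proof (rule the_equality)
    show "w \<in> vec_d d \<and> (\<lambda>i. if i < d then z i - w i else 0) \<in> R \<and> (\<forall>r\<in>R. ip d w r = 0)"
      using P1 P2 P3 by blast
  next
    fix w' assume w': "w' \<in> vec_d d \<and> (\<lambda>i. if i < d then z i - w' i else 0) \<in> R \<and> (\<forall>r\<in>R. ip d w' r = 0)"
    define y where "y = (\<lambda>i. (\<lambda>i. if i < d then z i - w' i else 0) i - (\<lambda>i. if i < d then z i - w i else 0) i)"
    have yR: "y \<in> R" unfolding y_def using w' P2 by (intro sub_diff[OF R]) auto
    have "ip d y y = ip d w y - ip d w' y"
      unfolding ip_diff_left[symmetric] by (rule ip_cong) (auto simp: y_def)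
    also have "\<dots> = 0" using P3 w' yR by simp
    finally have yy: "ip d y y = 0" .
    show "w' = w"
    proof
      fix i show "w' i = w i"
      proof (cases "i < d")
        case True
        then show ?thesis using ip_self_zero[OF yy True] by (simp add: y_def)
      next
        case False
        then show ?thesis using w' by (simp add: w_def vec_d_def)
      qed
    qed
  qed
  then show ?thesis unfolding w_def .
qed

abbreviation NN :: "real \<Rightarrow> real measure" where
  "NN s \<equiv> density lborel (normal_density 0 s)"

lemma NN_prob: "s > 0 \<Longrightarrow> prob_space (NN s)"
  by (rule prob_space_normal_density)

lemma NN_space[simp]: "space (NN s) = UNIV" by simp
lemma NN_sets[simp]: "sets (NN s) = sets borel" by simp

lemma NN_int1: assumes "s > 0" shows "integrable (NN s) (\<lambda>x. x)" "integral\<^sup>L (NN s) (\<lambda>x. x) = 0"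
proof -
  show "integrable (NN s) (\<lambda>x. x)"
    by (subst integrable_density) (use integrable_normal_moment_nz_1[OF assms, of 0] in auto)
  show "integral\<^sup>L (NN s) (\<lambda>x. x) = 0"
    by (subst integral_density) (use integral_normal_moment_nz_1[OF assms, of 0] in auto)
qed

lemma NN_int2: assumes "s > 0" shows "integrable (NN s) (\<lambda>x. x^2)" "integral\<^sup>L (NN s) (\<lambda>x. x^2) = s^2"
proof -
  show "integrable (NN s) (\<lambda>x. x^2)"
  proof -
    have "integrable lborel (\<lambda>x. normal_density 0 s x * x^2)"
      using integrable_normal_moment[OF assms, of 0 2] by simp
    then show ?thesis by (subst integrable_density) auto
  qed
  have "integral\<^sup>L lborel (\<lambda>x. normal_density 0 s x * (x - 0)^(2 * 1)) = fact (2 * 1) / ((2 / s\<^sup>2)^1 * fact 1)"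
    by (rule integral_normal_moment_even[OF assms])
  then have "integral\<^sup>L lborel (\<lambda>x. normal_density 0 s x * x^2) = s^2"
    using assms by (simp add: field_simps power2_eq_square)
  then show "integral\<^sup>L (NN s) (\<lambda>x. x^2) = s^2"
    by (subst integral_density) auto
qed

lemma NN_small:
  assumes s: "s > 0" and a: "a > 0"
  shows "measure (NN s) {-a<..<a} \<le> 2 * a / (s * sqrt (2 * pi))"
proof -
  define c where "c = 1 / (s * sqrt (2 * pi))"
  have cb: "normal_density 0 s x \<le> c" for x
  proof -
    have "exp (-(x - 0)\<^sup>2/ (2 * s\<^sup>2)) \<le> 1" by simp
    moreover have "sqrt (2 * pi * s\<^sup>2) = s * sqrt (2 * pi)"
      using s by (simp add: real_sqrt_mult)
    ultimately show ?thesis unfolding normal_density_def c_def using s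
      by (simp add: divide_right_mono)
  qed
  interpret prob_space "NN s" by (rule NN_prob[OF s])
  have "emeasure (NN s) {-a<..<a} = (\<integral>\<^sup>+ x. ennreal (normal_density 0 s x) * indicator {-a<..<a} x \<partial>lborel)"
    by (rule emeasure_density) auto
  also have "\<dots> \<le> (\<integral>\<^sup>+ x. ennreal c * indicator {-a<..<a} x \<partial>lborel)"
    by (intro nn_integral_mono) (auto simp: cb indicator_def intro!: ennreal_leI)
  also have "\<dots> = ennreal c * emeasure lborel {-a<..<a}"
    by (rule nn_integral_cmult_indicator) auto
  also have "\<dots> = ennreal c * ennreal (2 * a)" using a by simp
  also have "\<dots> = ennreal (c * (2 * a))" using a s by (subst ennreal_mult) (auto simp: c_def)
  finally have "ennreal (measure (NN s) {-a<..<a}) \<le> ennreal (c * (2 * a))"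
    by (simp add: emeasure_eq_measure)
  then have "measure (NN s) {-a<..<a} \<le> c * (2 * a)"
    using a s by (subst (asm) ennreal_le_iff) (auto simp: c_def)
  then show ?thesis by (simp add: c_def)
qed

lemma NN_big:
  assumes s: "s > 0"
  shows "measure (NN s) {x. s / 2 \<le> \<bar>x\<bar>} \<ge> 59/100"
proof -
  interpret prob_space "NN s" by (rule NN_prob[OF s])
  have eq: "{x. s / 2 \<le> \<bar>x\<bar>} = space (NN s) - {-(s/2)<..<s/2}" by auto
  have "measure (NN s) {x. s / 2 \<le> \<bar>x\<bar>} = 1 - measure (NN s) {-(s/2)<..<s/2}"
    unfolding eq by (rule prob_compl) simp
  moreover have "measure (NN s) {-(s/2)<..<s/2} \<le> 2 * (s/2) / (s * sqrt (2 * pi))"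
    by (rule NN_small) (use s in auto)
  moreover have "2 * (s/2) / (s * sqrt (2 * pi)) \<le> 41/100"
  proof -
    have "sqrt (6::real) \<le> sqrt (2 * pi)" using pi_gt3 by simp
    moreover have "(100/41::real) \<le> sqrt 6"
      by (rule real_le_rsqrt) (simp add: power2_eq_square)
    ultimately have "100/41 \<le> sqrt (2 * pi)" by linarith
    then show ?thesis using s by (simp add: field_simps)
  qed
  ultimately show ?thesis by linarith
qed

lemma pi_prod_gen:
  fixes N :: "'a measure" and f :: "nat \<Rightarrow> 'a \<Rightarrow> real" and d :: nat
  assumes N: "prob_space N" and f: "\<And>k. k < d \<Longrightarrow> integrable N (f k)"
  shows "integrable (PiM {..<d} (\<lambda>_. N)) (\<lambda>z. \<Prod>k\<in>{..<d}. f k (z k))"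
    "integral\<^sup>L (PiM {..<d} (\<lambda>_. N)) (\<lambda>z. \<Prod>k\<in>{..<d}. f k (z k)) = (\<Prod>k\<in>{..<d}. integral\<^sup>L N (f k))"
proof -
  interpret P: product_prob_space "\<lambda>_. N" "{..<d}"
    unfolding product_prob_space_def product_sigma_finite_def product_prob_space_axioms_def
    using N prob_space_imp_sigma_finite[OF N] by simp
  show "integrable (PiM {..<d} (\<lambda>_. N)) (\<lambda>z. \<Prod>k\<in>{..<d}. f k (z k))"
    by (rule P.product_integrable_prod) (auto intro: f)
  show "integral\<^sup>L (PiM {..<d} (\<lambda>_. N)) (\<lambda>z. \<Prod>k\<in>{..<d}. f k (z k)) = (\<Prod>k\<in>{..<d}. integral\<^sup>L N (f k))"
    by (rule P.product_integral_prod) (auto intro: f)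
qed

lemma pi_single:
  fixes N :: "'a measure" and g :: "'a \<Rightarrow> real" and d i :: nat
  assumes N: "prob_space N" and i: "i < d" and g: "integrable N g"
  shows "integrable (PiM {..<d} (\<lambda>_. N)) (\<lambda>z. g (z i))"
    "integral\<^sup>L (PiM {..<d} (\<lambda>_. N)) (\<lambda>z. g (z i)) = integral\<^sup>L N g"
proof -
  interpret prob_space N by (rule N)
  define f where "f = (\<lambda>k. if k = i then g else (\<lambda>_. 1::real))"
  have f: "\<And>k. k < d \<Longrightarrow> integrable N (f k)" using g by (auto simp: f_def)
  have eq: "(\<lambda>z. \<Prod>k\<in>{..<d}. f k (z k)) = (\<lambda>z. g (z i))"
  proof
    fix z :: "nat \<Rightarrow> 'a"
    have "(\<Prod>k\<in>{..<d}. f k (z k)) = (\<Prod>k\<in>{i}. f k (z k))"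
      by (rule prod.mono_neutral_right) (use i prob_space.prob_space[OF N] in \<open>auto simp: f_def\<close>)
    then show "(\<Prod>k\<in>{..<d}. f k (z k)) = g (z i)" by (simp add: f_def)
  qed
  have ieq: "(\<Prod>k\<in>{..<d}. integral\<^sup>L N (f k)) = (\<Prod>k\<in>{i}. integral\<^sup>L N (f k))"
    by (rule prod.mono_neutral_right) (use i prob_space.prob_space[OF N] in \<open>auto simp: f_def\<close>)
  show "integrable (PiM {..<d} (\<lambda>_. N)) (\<lambda>z. g (z i))"
    using pi_prod_gen(1)[of N d f, OF N f] unfolding eq .
  show "integral\<^sup>L (PiM {..<d} (\<lambda>_. N)) (\<lambda>z. g (z i)) = integral\<^sup>L N g"
    using pi_prod_gen(2)[of N d f, OF N f] eq ieq by (simp add: f_def)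
qed

lemma pi_pair:
  fixes N :: "'a measure" and g h :: "'a \<Rightarrow> real" and d i j :: nat
  assumes N: "prob_space N" and i: "i < d" and j: "j < d" and ij: "i \<noteq> j"
    and g: "integrable N g" and h: "integrable N h"
  shows "integrable (PiM {..<d} (\<lambda>_. N)) (\<lambda>z. g (z i) * h (z j))"
    "integral\<^sup>L (PiM {..<d} (\<lambda>_. N)) (\<lambda>z. g (z i) * h (z j)) = integral\<^sup>L N g * integral\<^sup>L N h"
proof -
  interpret prob_space N by (rule N)
  define f where "f = (\<lambda>k. if k = i then g else if k = j then h else (\<lambda>_. 1::real))"
  have f: "\<And>k. k < d \<Longrightarrow> integrable N (f k)" using g h by (auto simp: f_def)
  have eq: "(\<lambda>z. \<Prod>k\<in>{..<d}. f k (z k)) = (\<lambda>z. g (z i) * h (z j))"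
  proof
    fix z :: "nat \<Rightarrow> 'a"
    have "(\<Prod>k\<in>{..<d}. f k (z k)) = (\<Prod>k\<in>{i,j}. f k (z k))"
      by (rule prod.mono_neutral_right) (use i j prob_space.prob_space[OF N] in \<open>auto simp: f_def\<close>)
    then show "(\<Prod>k\<in>{..<d}. f k (z k)) = g (z i) * h (z j)" using ij by (simp add: f_def)
  qed
  have ieq: "(\<Prod>k\<in>{..<d}. integral\<^sup>L N (f k)) = (\<Prod>k\<in>{i,j}. integral\<^sup>L N (f k))"
    by (rule prod.mono_neutral_right) (use i j prob_space.prob_space[OF N] in \<open>auto simp: f_def\<close>)
  show "integrable (PiM {..<d} (\<lambda>_. N)) (\<lambda>z. g (z i) * h (z j))"
    using pi_prod_gen(1)[of N d f, OF N f] unfolding eq .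
  show "integral\<^sup>L (PiM {..<d} (\<lambda>_. N)) (\<lambda>z. g (z i) * h (z j)) = integral\<^sup>L N g * integral\<^sup>L N h"
    using pi_prod_gen(2)[of N d f, OF N f] eq ieq ij by (simp add: f_def)
qed

lemma sq_sum:
  fixes N :: "'a measure" and g :: "nat \<Rightarrow> 'a \<Rightarrow> real" and d :: nat
  assumes N: "prob_space N" and g1: "\<And>i. integrable N (g i)"
    and g2: "\<And>i. integrable N (\<lambda>x. g i x * g i x)" and g0: "\<And>i. integral\<^sup>L N (g i) = 0"
  shows "integrable (PiM {..<d} (\<lambda>_. N)) (\<lambda>z. (\<Sum>i<d. g i (z i))^2)"
    "integral\<^sup>L (PiM {..<d} (\<lambda>_. N)) (\<lambda>z. (\<Sum>i<d. g i (z i))^2) = (\<Sum>i<d. integral\<^sup>L N (\<lambda>x. g i x * g i x))"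
proof -
  have sq: "(\<lambda>z. (\<Sum>i<d. g i (z i))^2) = (\<lambda>z. \<Sum>i<d. \<Sum>j<d. g i (z i) * g j (z j))"
    by (simp add: power2_eq_square sum_product)
  have int: "integrable (PiM {..<d} (\<lambda>_. N)) (\<lambda>z. g i (z i) * g j (z j))" if "i < d" "j < d" for i j
  proof (cases "i = j")
    case True
    then show ?thesis using pi_single(1)[OF N that(1) g2[of i]] by simp
  next
    case False
    then show ?thesis using pi_pair(1)[OF N that False g1 g1] by simp
  qed
  have val: "integral\<^sup>L (PiM {..<d} (\<lambda>_. N)) (\<lambda>z. g i (z i) * g j (z j)) =
      (if i = j then integral\<^sup>L N (\<lambda>x. g i x * g i x) else 0)" if "i < d" "j < d" for i j
  proof (cases "i = j")
    case True
    then show ?thesis using pi_single(2)[OF N that(1) g2[of i]] by simp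
  next
    case False
    then show ?thesis using pi_pair(2)[OF N that False g1 g1] g0 by simp
  qed
  have int_i: "integrable (PiM {..<d} (\<lambda>_. N)) (\<lambda>z. \<Sum>j<d. g i (z i) * g j (z j))" if "i < d" for i
    by (rule Bochner_Integration.integrable_sum) (use int that in simp)
  show "integrable (PiM {..<d} (\<lambda>_. N)) (\<lambda>z. (\<Sum>i<d. g i (z i))^2)"
    unfolding sq using int_i by (intro Bochner_Integration.integrable_sum) (auto intro: int)
  have "integral\<^sup>L (PiM {..<d} (\<lambda>_. N)) (\<lambda>z. (\<Sum>i<d. g i (z i))^2) =
      (\<Sum>i<d. \<Sum>j<d. integral\<^sup>L (PiM {..<d} (\<lambda>_. N)) (\<lambda>z. g i (z i) * g j (z j)))"
    unfolding sq
  proof (subst Bochner_Integration.integral_sum)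
    show "\<And>i. i \<in> {..<d} \<Longrightarrow> integrable (PiM {..<d} (\<lambda>_. N)) (\<lambda>z. \<Sum>j<d. g i (z i) * g j (z j))"
      using int_i by simp
    show "(\<Sum>i<d. integral\<^sup>L (PiM {..<d} (\<lambda>_. N)) (\<lambda>z. \<Sum>j<d. g i (z i) * g j (z j))) =
      (\<Sum>i<d. \<Sum>j<d. integral\<^sup>L (PiM {..<d} (\<lambda>_. N)) (\<lambda>z. g i (z i) * g j (z j)))"
      by (intro sum.cong refl Bochner_Integration.integral_sum) (use int in auto)
  qed
  also have "\<dots> = (\<Sum>i<d. \<Sum>j<d. if i = j then integral\<^sup>L N (\<lambda>x. g i x * g i x) else 0)"
    by (intro sum.cong refl) (simp add: val)
  also have "\<dots> = (\<Sum>i<d. integral\<^sup>L N (\<lambda>x. g i x * g i x))"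
    by (simp add: if_distrib cong: if_cong)
  finally show "integral\<^sup>L (PiM {..<d} (\<lambda>_. N)) (\<lambda>z. (\<Sum>i<d. g i (z i))^2) = (\<Sum>i<d. integral\<^sup>L N (\<lambda>x. g i x * g i x))" .
qed

lemma card_sum_if: "real (card {i\<in>{..<d::nat}. P i}) = (\<Sum>i<d. if P i then 1 else (0::real))"
proof -
  have "(\<Sum>i\<in>{i\<in>{..<d}. P i}. (1::real)) = (\<Sum>i<d. if P i then 1 else 0)"
    by (rule sum.inter_filter) simp
  then show ?thesis by simp
qed

lemma NN_bad1:
  assumes s: "s > 0" and q: "q = measure (NN s) S" and S: "S \<in> sets borel"
  shows "integrable (NN s) (\<lambda>x. indicator S x - q)"
    "integrable (NN s) (\<lambda>x. (indicator S x - q) * (indicator S x - q))"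
    "integral\<^sup>L (NN s) (\<lambda>x. indicator S x - q) = 0"
    "integral\<^sup>L (NN s) (\<lambda>x. (indicator S x - q) * (indicator S x - q)) \<le> 1"
proof -
  interpret N: prob_space "NN s" by (rule NN_prob[OF s])
  have q01: "0 \<le> q" "q \<le> 1" unfolding q by auto
  have b: "\<bar>(indicator S x - q) * (indicator S x - q)\<bar> \<le> 1" for x :: real
    using q01 by (auto simp: indicator_def abs_mult mult_le_one)
  have b1: "\<bar>indicator S x - q\<bar> \<le> 1" for x :: real
    using q01 by (auto simp: indicator_def)
  show i1: "integrable (NN s) (\<lambda>x. indicator S x - q)"
    by (rule N.integrable_const_bound[where B=1]) (use b1 S in auto)
  show i2: "integrable (NN s) (\<lambda>x. (indicator S x - q) * (indicator S x - q))"
    by (rule N.integrable_const_bound[where B=1]) (use b S in auto)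
  have "integral\<^sup>L (NN s) (\<lambda>x. indicator S x - q) = integral\<^sup>L (NN s) (indicator S) - integral\<^sup>L (NN s) (\<lambda>x. q)"
  proof (rule Bochner_Integration.integral_diff)
    show "integrable (NN s) (indicator S :: real \<Rightarrow> real)"
      by (rule N.integrable_const_bound[where B=1]) (use S in auto)
  qed simp
  also have "\<dots> = 0" using N.prob_space q by simp
  finally show "integral\<^sup>L (NN s) (\<lambda>x. indicator S x - q) = 0" .
  have "integral\<^sup>L (NN s) (\<lambda>x. (indicator S x - q) * (indicator S x - q)) \<le> integral\<^sup>L (NN s) (\<lambda>x. 1)"
    by (rule integral_mono) (use i2 b in \<open>auto simp: abs_le_iff\<close>)
  also have "\<dots> = 1" using N.prob_space by simp
  finally show "integral\<^sup>L (NN s) (\<lambda>x. (indicator S x - q) * (indicator S x - q)) \<le> 1" .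
qed

lemma G_quad:
  assumes s: "s > 0"
  shows "integrable (PiM {..<d} (\<lambda>_. NN s)) (\<lambda>z. (ip d u z)^2)"
    "integral\<^sup>L (PiM {..<d} (\<lambda>_. NN s)) (\<lambda>z. (ip d u z)^2) = s^2 * ip d u u"
proof -
  have N: "prob_space (NN s)" by (rule NN_prob[OF s])
  define g where "g = (\<lambda>i (x::real). u i * x)"
  have g1: "\<And>i. integrable (NN s) (g i)" unfolding g_def using NN_int1[OF s] by auto
  have g2: "integrable (NN s) (\<lambda>x. g i x * g i x)" for i
  proof -
    have "(\<lambda>x. g i x * g i x) = (\<lambda>x. (u i * u i) * x^2)" unfolding g_def
      by (simp add: power2_eq_square mult_ac)
    then show ?thesis using integrable_mult_right[OF NN_int2(1)[OF s], of "u i * u i"] by simp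
  qed
  have g0: "\<And>i. integral\<^sup>L (NN s) (g i) = 0" unfolding g_def using NN_int1[OF s] by simp
  have eq: "(\<lambda>z. (ip d u z)^2) = (\<lambda>z. (\<Sum>i<d. g i (z i))^2)" unfolding g_def ip_def by simp
  show "integrable (PiM {..<d} (\<lambda>_. NN s)) (\<lambda>z. (ip d u z)^2)"
    unfolding eq by (rule sq_sum(1)[OF N g1 g2 g0])
  have "integral\<^sup>L (PiM {..<d} (\<lambda>_. NN s)) (\<lambda>z. (ip d u z)^2) = (\<Sum>i<d. integral\<^sup>L (NN s) (\<lambda>x. g i x * g i x))"
    unfolding eq by (rule sq_sum(2)[OF N g1 g2 g0])
  also have "\<dots> = (\<Sum>i<d. u i * u i * s^2)"
  proof (intro sum.cong refl)
    fix i
    have "integral\<^sup>L (NN s) (\<lambda>x. g i x * g i x) = integral\<^sup>L (NN s) (\<lambda>x. (u i * u i) * x^2)"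
      unfolding g_def by (simp add: power2_eq_square mult_ac)
    also have "\<dots> = u i * u i * s^2" using NN_int2[OF s] by simp
    finally show "integral\<^sup>L (NN s) (\<lambda>x. g i x * g i x) = u i * u i * s^2" .
  qed
  also have "\<dots> = s^2 * ip d u u" unfolding ip_def by (simp add: sum_distrib_left mult_ac)
  finally show "integral\<^sup>L (PiM {..<d} (\<lambda>_. NN s)) (\<lambda>z. (ip d u z)^2) = s^2 * ip d u u" .
qed

lemma main_fixed:
  fixes d :: nat and R :: "(nat \<Rightarrow> real) set"
  assumes d: "d \<ge> 1" and R: "is_subspace d R"
  shows "measure (gauss_vec d)
             {z \<in> space (gauss_vec d).
                2 * card {i\<in>{..<d}. \<bar>perp_proj d R z i\<bar> \<ge> 1 / (4 * sqrt (real d))} \<ge> d}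
         \<ge> 1 - 625 / real d - 320 * real (sub_dim R) / real d"
proof -
  define s where "s = 1 / sqrt (real d)"
  have dpos: "real d > 0" using d by simp
  have s: "s > 0" unfolding s_def using dpos by simp
  have s2: "s^2 = 1 / real d" unfolding s_def using dpos by (simp add: power_divide)
  define G where "G = PiM {..<d} (\<lambda>_. NN s)"
  have Gd: "gauss_vec d = G" unfolding G_def gauss_vec_def s_def by simp
  interpret N: prob_space "NN s" by (rule NN_prob[OF s])
  have Gp: "prob_space G" unfolding G_def by (rule prob_space_PiM) (simp add: NN_prob s)
  interpret P: prob_space G by (rule Gp)
  obtain m U where mU: "m \<le> sub_dim R" "ortho d U m" "\<forall>k<m. U k \<in> R" "\<forall>r\<in>R. expand d U m r = r"
    using proj_rep[OF R] by blast
  have pe: "\<And>z. perp_proj d R z = (\<lambda>i. if i < d then z i - expand d U m z i else 0)"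
    using perp_eq[OF R mU(2-4)] by blast
  define \<delta> where "\<delta> = 1 / (4 * sqrt (real d))"
  have \<delta>pos: "\<delta> > 0" unfolding \<delta>_def using dpos by simp
  have \<delta>2: "\<delta>^2 = 1 / (16 * real d)" unfolding \<delta>_def using dpos by (simp add: power_divide power_mult_distrib)
  have \<delta>s: "2 * \<delta> = s / 2" unfolding \<delta>_def s_def by simp
  define S where "S = {x::real. s / 2 \<le> \<bar>x\<bar>}"
  have Sb: "S \<in> sets borel" unfolding S_def by measurable
  define q where "q = measure (NN s) S"
  have q: "59/100 \<le> q" unfolding q_def S_def by (rule NN_big[OF s])
  define g where "g = (\<lambda>(i::nat) x. indicator S x - q)"
  note gb = NN_bad1[OF s q_def Sb]
  have g1: "\<And>i. integrable (NN s) (g i)" unfolding g_def using gb(1) .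
  have g2: "\<And>i. integrable (NN s) (\<lambda>x. g i x * g i x)" unfolding g_def using gb(2) .
  have g0: "\<And>i. integral\<^sup>L (NN s) (g i) = 0" unfolding g_def using gb(3) .
  define F1 where "F1 = (\<lambda>z. (\<Sum>i<d. g i (z i))^2)"
  have F1i: "integrable G F1" unfolding F1_def G_def by (rule sq_sum(1)[OF NN_prob[OF s] g1 g2 g0])
  have "integral\<^sup>L G F1 = (\<Sum>i<d. integral\<^sup>L (NN s) (\<lambda>x. g i x * g i x))"
    unfolding F1_def G_def by (rule sq_sum(2)[OF NN_prob[OF s] g1 g2 g0])
  also have "\<dots> \<le> (\<Sum>i<d. 1)" by (intro sum_mono) (unfold g_def, rule gb(4))
  finally have F1e: "integral\<^sup>L G F1 \<le> real d" by simp
  define B1 where "B1 = {z\<in>space G. (real d / 25)^2 \<le> F1 z}"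
  have pB1: "P.prob B1 \<le> 625 / real d"
  proof -
    have "P.prob B1 \<le> integral\<^sup>L G F1 / (real d / 25)^2"
      unfolding B1_def by (rule integral_Markov_inequality_measure[OF F1i, of "space G"])
        (use dpos in \<open>auto simp: F1_def\<close>)
    also have "\<dots> \<le> real d / (real d / 25)^2"
      by (rule divide_right_mono[OF F1e]) simp
    also have "\<dots> = 625 / real d" using dpos by (simp add: power2_eq_square field_simps)
    finally show ?thesis .
  qed
  define Q where "Q = (\<lambda>z. \<Sum>k<m. (ip d (U k) z)^2)"
  have Qi: "integrable G Q" unfolding Q_def G_def
    by (intro Bochner_Integration.integrable_sum G_quad(1)[OF s])
  have "integral\<^sup>L G Q = (\<Sum>k<m. integral\<^sup>L G (\<lambda>z. (ip d (U k) z)^2))"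
    unfolding Q_def G_def by (intro Bochner_Integration.integral_sum G_quad(1)[OF s])
  also have "\<dots> = (\<Sum>k<m. s^2)"
    unfolding G_def using mU(2) by (intro sum.cong refl) (simp add: G_quad(2)[OF s] ortho_def)
  finally have Qe: "integral\<^sup>L G Q = real m / real d" using s2 by simp
  define B2 where "B2 = {z\<in>space G. 1/320 \<le> Q z}"
  have pB2: "P.prob B2 \<le> 320 * real (sub_dim R) / real d"
  proof -
    have "P.prob B2 \<le> integral\<^sup>L G Q / (1/320)"
      unfolding B2_def by (rule integral_Markov_inequality_measure[OF Qi, of "space G"])
        (auto simp: Q_def intro!: AE_I2 sum_nonneg)
    also have "\<dots> = 320 * real m / real d" using Qe by simp
    also have "\<dots> \<le> 320 * real (sub_dim R) / real d"
      using mU(1) dpos by (simp add: divide_right_mono)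
    finally show ?thesis .
  qed
  have B1s: "B1 \<in> sets G" unfolding B1_def F1_def g_def G_def S_def by measurable
  have B2s: "B2 \<in> sets G" unfolding B2_def Q_def ip_def G_def by measurable
  define E where "E = {z \<in> space G. real d \<le> 2 * (\<Sum>i<d. if \<delta> \<le> \<bar>z i - expand d U m z i\<bar> then 1 else (0::real))}"
  have Es: "E \<in> sets G" unfolding E_def expand_def ip_def G_def by measurable
  have Eeq: "{z \<in> space G. 2 * card {i\<in>{..<d}. \<bar>perp_proj d R z i\<bar> \<ge> 1 / (4 * sqrt (real d))} \<ge> d} = E"
  proof -
    have "card {i\<in>{..<d}. \<bar>perp_proj d R z i\<bar> \<ge> 1 / (4 * sqrt (real d))} =
          card {i\<in>{..<d}. \<delta> \<le> \<bar>z i - expand d U m z i\<bar>}" for z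
      unfolding pe \<delta>_def by (intro arg_cong[where f=card]) auto
    then show ?thesis unfolding E_def
      by (auto simp: card_sum_if[symmetric] simp del: of_nat_mult)
  qed
  have good: "space G - (B1 \<union> B2) \<subseteq> E"
  proof
    fix z assume z: "z \<in> space G - (B1 \<union> B2)"
    then have zs: "z \<in> space G" and f1: "F1 z < (real d / 25)^2" and f2: "Q z < 1/320"
      unfolding B1_def B2_def by auto
    define p where "p = expand d U m z"
    define T where "T = {i\<in>{..<d}. z i \<in> S}"
    define W where "W = {i\<in>{..<d}. \<delta> \<le> \<bar>z i - p i\<bar>}"
    define B where "B = {i\<in>{..<d}. \<delta> < \<bar>p i\<bar>}"
    have sumg: "(\<Sum>i<d. g i (z i)) = real (card T) - real d * q"
    proof -
      have "(\<Sum>i<d. g i (z i)) = (\<Sum>i<d. indicator S (z i)) - (\<Sum>i<d. q)"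
        unfolding g_def by (rule sum_subtractf)
      also have "(\<Sum>i<d. indicator S (z i)) = real (card ({..<d} \<inter> {i. z i \<in> S}))"
        by (simp add: indicator_def)
      also have "{..<d} \<inter> {i. z i \<in> S} = T" by (auto simp: T_def)
      finally show ?thesis by simp
    qed
    have "\<bar>real (card T) - real d * q\<bar> < real d / 25"
    proof -
      have "(real (card T) - real d * q)^2 < (real d / 25)^2" using f1 sumg unfolding F1_def by simp
      then have "\<bar>real (card T) - real d * q\<bar>^2 < (real d / 25)^2" by simp
      then show ?thesis by (rule power2_less_imp_less) (use dpos in simp)
    qed
    moreover have "real d * (59/100) \<le> real d * q" using q dpos by (intro mult_left_mono) auto
    ultimately have T: "real (card T) > real d * (55/100)" by linarith
    have TWB: "T \<subseteq> W \<union> B"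
    proof
      fix i assume "i \<in> T"
      then have i: "i < d" "s / 2 \<le> \<bar>z i\<bar>" unfolding T_def S_def by auto
      show "i \<in> W \<union> B"
      proof (cases "\<delta> < \<bar>p i\<bar>")
        case True then show ?thesis using i unfolding B_def by auto
      next
        case False
        then have "\<delta> \<le> \<bar>z i - p i\<bar>" using i \<delta>s by linarith
        then show ?thesis using i unfolding W_def by auto
      qed
    qed
    have cT: "card T \<le> card W + card B"
      by (rule order.trans[OF card_mono[OF _ TWB] card_Un_le]) (auto simp: W_def B_def)
    have "real (card B) * \<delta>^2 = (\<Sum>i\<in>B. \<delta>^2)" by simp
    also have "\<dots> \<le> (\<Sum>i\<in>B. (p i)^2)"
      by (intro sum_mono) (auto simp: B_def abs_le_square_iff[symmetric] \<delta>pos less_imp_le)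
    also have "\<dots> \<le> (\<Sum>i<d. (p i)^2)"
      by (intro sum_mono2) (auto simp: B_def)
    also have "\<dots> = ip d p p" unfolding ip_def by (simp add: power2_eq_square)
    also have "\<dots> = Q z"
      unfolding p_def Q_def using mU(2) by (simp add: ip_expand_expand ip_expand power2_eq_square)
    finally have "real (card B) * \<delta>^2 < 1/320" using f2 by simp
    then have "real (card B) < real d / 20" using dpos unfolding \<delta>2 by (simp add: field_simps)
    then have "real d \<le> 2 * real (card W)" using T cT by linarith
    moreover have "real (card W) = (\<Sum>i<d. if \<delta> \<le> \<bar>z i - expand d U m z i\<bar> then 1 else (0::real))"
      unfolding W_def p_def by (rule card_sum_if)
    ultimately show "z \<in> E" unfolding E_def using zs by simp
  qed
  have "1 - 625 / real d - 320 * real (sub_dim R) / real d \<le> 1 - P.prob B1 - P.prob B2"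
    using pB1 pB2 by simp
  also have "\<dots> \<le> 1 - P.prob (B1 \<union> B2)" using measure_Un_le[OF B1s B2s] by simp
  also have "\<dots> = P.prob (space G - (B1 \<union> B2))" using B1s B2s by (simp add: P.prob_compl)
  also have "\<dots> \<le> P.prob E" by (rule P.finite_measure_mono[OF good Es])
  finally show ?thesis unfolding Gd Eeq .
qed

theorem lemma14:
  shows "\<forall>\<epsilon>>0. \<exists>D. \<forall>d\<ge>D. \<forall>R. is_subspace d R \<longrightarrow>
           real (sub_dim R) \<le> real d / (16 * (ln (real d))\<^sup>2) \<longrightarrow>
           measure (gauss_vec d)
             {z \<in> space (gauss_vec d).
                2 * card {i\<in>{..<d}. \<bar>perp_proj d R z i\<bar> \<ge> 1 / (4 * sqrt (real d))} \<ge> d}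
             \<ge> 1 - \<epsilon>"
proof (intro allI impI)
  fix \<epsilon> :: real assume e: "\<epsilon> > 0"
  define D where "D = nat \<lceil>max (1250 / \<epsilon>) (exp (sqrt (40 / \<epsilon>)))\<rceil> + 2"
  show "\<exists>D. \<forall>d\<ge>D. \<forall>R. is_subspace d R \<longrightarrow>
           real (sub_dim R) \<le> real d / (16 * (ln (real d))\<^sup>2) \<longrightarrow>
           measure (gauss_vec d)
             {z \<in> space (gauss_vec d).
                2 * card {i\<in>{..<d}. \<bar>perp_proj d R z i\<bar> \<ge> 1 / (4 * sqrt (real d))} \<ge> d}
             \<ge> 1 - \<epsilon>"
  proof (intro exI[of _ D] allI impI)
    fix d :: nat and R assume dD: "D \<le> d" and R: "is_subspace d R"
      and t: "real (sub_dim R) \<le> real d / (16 * (ln (real d))\<^sup>2)"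
    have "max (1250 / \<epsilon>) (exp (sqrt (40 / \<epsilon>))) \<le> real (nat \<lceil>max (1250 / \<epsilon>) (exp (sqrt (40 / \<epsilon>)))\<rceil>)"
      by (rule real_nat_ceiling_ge)
    then have "real D \<ge> max (1250 / \<epsilon>) (exp (sqrt (40 / \<epsilon>)))" unfolding D_def by simp
    moreover have "real D \<le> real d" using dD by simp
    ultimately have d1: "real d \<ge> 1250 / \<epsilon>" and d2: "real d \<ge> exp (sqrt (40 / \<epsilon>))"
      by linarith+
    have d3: "d \<ge> 2" using dD unfolding D_def by simp
    then have dpos: "real d > 0" by simp
    have "1250 \<le> \<epsilon> * real d" using d1 e by (simp add: pos_divide_le_eq mult.commute)
    then have a: "625 / real d \<le> \<epsilon> / 2"
      using dpos by (simp add: pos_divide_le_eq)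
    have "ln (exp (sqrt (40 / \<epsilon>))) \<le> ln (real d)"
      by (subst ln_le_cancel_iff) (use d2 dpos in auto)
    then have "ln (real d) \<ge> sqrt (40 / \<epsilon>)" by simp
    moreover have "sqrt (40 / \<epsilon>) > 0" using e by simp
    ultimately have "(ln (real d))^2 \<ge> (sqrt (40 / \<epsilon>))^2"
      by (intro power_mono) auto
    then have l2: "(ln (real d))^2 \<ge> 40 / \<epsilon>" using e by simp
    have "40 / \<epsilon> > 0" using e by simp
    then have lpos: "(ln (real d))^2 > 0" using l2 by linarith
    have "320 * real (sub_dim R) / real d \<le> 320 * (real d / (16 * (ln (real d))\<^sup>2)) / real d"
      using t dpos by (intro divide_right_mono mult_left_mono) auto
    also have "\<dots> = 20 / (ln (real d))^2" using dpos by (simp add: field_simps)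
    also have "\<dots> \<le> 20 / (40 / \<epsilon>)"
      by (rule divide_left_mono[OF l2]) (use e lpos in auto)
    also have "\<dots> = \<epsilon> / 2" by simp
    finally have b: "320 * real (sub_dim R) / real d \<le> \<epsilon> / 2" .
    have "measure (gauss_vec d)
             {z \<in> space (gauss_vec d).
                2 * card {i\<in>{..<d}. \<bar>perp_proj d R z i\<bar> \<ge> 1 / (4 * sqrt (real d))} \<ge> d}
         \<ge> 1 - 625 / real d - 320 * real (sub_dim R) / real d"
      by (rule main_fixed) (use d3 R in auto)
    then show "measure (gauss_vec d)
             {z \<in> space (gauss_vec d).
                2 * card {i\<in>{..<d}. \<bar>perp_proj d R z i\<bar> \<ge> 1 / (4 * sqrt (real d))} \<ge> d}
             \<ge> 1 - \<epsilon>" using a b by linarith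
  qed
qed

end
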